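(* In the storage model of the context, assume that the graph $\mathcal G$ on $\{1,\dots,n\}$ in which $j,k$ are adjacent iff $j,k\in S_i$ for some $i$ is connected, and that the linear system \[ \sum_{j=1}^{\kappa_i}\alpha_{ij}=\lambda_i\ (i=1,\dots,\mathcal K),\qquad \sum_{i=1}^{\mathcal K}\sum_{j=1}^{\kappa_i}\alpha_{ij}\,\delta_{\ell,s^i_j}=\tfrac1n\ (\ell=1,\dots,n) \] has a positive solution. Let the embedded load chain $X^e(m)$ be constructed using either the JSQ routing policy or the $\varepsilon$-PSERP. Then there exist $c_2>0$ and $a>0$ such that for all $x\in\mathbb N^n$ with $\max_{i}\bigl|x_i-\frac1n\sum_{j=1}^nx_j\bigr|\ge a$, \[ \mathbf E\bigl(f(X^e(m+1))-f(X^e(m))\mid X^e(m)=x\bigr)\le -c_2\sqrt{f(x)}, \] where $f(y)=\sum_{l=1}^n\bigl(y_l-\frac1n\sum_{k=1}^ny_k\bigr)^2$.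
   Context: Storage model: $n$ nodes, non-empty neighborhoods $S_1,\dots,S_{\mathcal K}\subset\{1,\dots,n\}$ covering $\{1,\dots,n\}$, $\kappa_i=|S_i|$, $S_i=\{s^i_1,\dots,s^i_{\kappa_i}\}$ a fixed enumeration. Items arrive at $S_i$ as independent Poisson processes with rates $\lambda_i>0$, $\sum_i\lambda_i=1$; each item is stored at one node of its neighborhood according to the routing policy, independently across arrivals. $X^e(m)\in\mathbb N^n$ is the vector of node loads after the $m$-th arrival. For $x\in\mathbb N^n$, $s^i_{j_{\min}}(x)$ is the first node of $S_i$ at which $x$ is minimal over $S_i$, $s^i_{j_{\max}}(x)$ the last node of $S_i$ at which $x$ is maximal over $S_i$. JSQ: an arriving item at $S_i$ goes to $s^i_{j_{\min}}(x)$. $\varepsilon$-PSERP (given a positive solution $\alpha_{ij}$ and $0<\varepsilon<\min\alpha_{ij}$): an item arriving at $S_i$ goes to $s^i_j$ with probability $(\alpha_{ij}+\varepsilon)/\lambda_i$ if $s^i_j=s^i_{j_{\min}}(x)$, $(\alpha_{ij}-\varepsilon)/\lambda_i$ if $s^i_j=s^i_{j_{\max}}(x)$, $\alpha_{ij}/\lambda_i$ otherwise; if $\kappa_i=1$ it goes to the unique node of $S_i$. $\delta_{\ell,m}$ is the Kronecker delta. *)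

theory Defs
  imports "HOL-Probability.Probability"
begin

text \<open>Nodes are 0..<n (shifted by one w.r.t. the paper), neighborhoods are indexed by
0..<K, and S i is the fixed enumeration of the i-th neighborhood (a distinct list).
Load vectors are functions nat => nat; only the coordinates below n matter.\<close>

datatype policy = JSQ | PSERP real

definition jmin :: "(nat \<Rightarrow> nat list) \<Rightarrow> nat \<Rightarrow> (nat \<Rightarrow> nat) \<Rightarrow> nat" where
  "jmin S i x = (LEAST j. j < length (S i) \<and> x (S i ! j) = Min (x ` set (S i)))"

definition jmax :: "(nat \<Rightarrow> nat list) \<Rightarrow> nat \<Rightarrow> (nat \<Rightarrow> nat) \<Rightarrow> nat" where
  "jmax S i x = (GREATEST j. j < length (S i) \<and> x (S i ! j) = Max (x ` set (S i)))"

definition route_prob ::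
  "policy \<Rightarrow> (nat \<Rightarrow> nat list) \<Rightarrow> (nat \<Rightarrow> real) \<Rightarrow> (nat \<Rightarrow> nat \<Rightarrow> real)
     \<Rightarrow> nat \<Rightarrow> nat \<Rightarrow> (nat \<Rightarrow> nat) \<Rightarrow> real" where
  "route_prob pol S lam alpha i j x =
     (case pol of
        JSQ \<Rightarrow> (if j = jmin S i x then 1 else 0)
      | PSERP eps \<Rightarrow>
          (if length (S i) = 1 then 1
           else if j = jmin S i x then (alpha i j + eps) / lam i
           else if j = jmax S i x then (alpha i j - eps) / lam i
           else alpha i j / lam i))"

text \<open>one-step transition law of the embedded load chain X^e from state x:
the arrival lands at S i with probability lam i (superposition of the Poisson
streams, sum of rates 1), then it is routed according to the policy.\<close>
definition step_pmf ::
  "policy \<Rightarrow> nat \<Rightarrow> (nat \<Rightarrow> nat list) \<Rightarrow> (nat \<Rightarrow> real) \<Rightarrow> (nat \<Rightarrow> nat \<Rightarrow> real)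
     \<Rightarrow> (nat \<Rightarrow> nat) \<Rightarrow> (nat \<Rightarrow> nat) pmf" where
  "step_pmf pol K S lam alpha x =
     bind_pmf (pmf_of_list (map (\<lambda>i. (i, lam i)) [0..<K]))
       (\<lambda>i. map_pmf (\<lambda>j. x((S i ! j) := Suc (x (S i ! j))))
              (pmf_of_list (map (\<lambda>j. (j, route_prob pol S lam alpha i j x)) [0..<length (S i)])))"

definition mean_load :: "nat \<Rightarrow> (nat \<Rightarrow> nat) \<Rightarrow> real" where
  "mean_load n y = (\<Sum>k<n. real (y k)) / real n"

definition fdev :: "nat \<Rightarrow> (nat \<Rightarrow> nat) \<Rightarrow> real" where
  "fdev n y = (\<Sum>l<n. (real (y l) - mean_load n y)\<^sup>2)"

definition adjacent :: "nat \<Rightarrow> (nat \<Rightarrow> nat list) \<Rightarrow> nat \<Rightarrow> nat \<Rightarrow> bool" where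
  "adjacent K S j k \<longleftrightarrow> (\<exists>i<K. j \<in> set (S i) \<and> k \<in> set (S i))"

definition graph_connected :: "nat \<Rightarrow> nat \<Rightarrow> (nat \<Rightarrow> nat list) \<Rightarrow> bool" where
  "graph_connected n K S \<longleftrightarrow>
     (\<forall>j<n. \<forall>k<n. (j, k) \<in> {(u, v). adjacent K S u v}\<^sup>*)"

end

theory Submission
  imports Defs
begin

lemma filt_upt: "sum_list (map snd (filter (\<lambda>z. fst z = i) (map (\<lambda>j. (j, w j)) [0..<N]))) = (if i < N then (w i::real) else 0)"
  by (induction N) (auto simp: less_Suc_eq)

lemma exp_pmf_of_list_upt:
  fixes w :: "nat \<Rightarrow> real" and g :: "nat \<Rightarrow> real"
  assumes nn: "\<forall>i<N. w i \<ge> 0" and s1: "(\<Sum>i<N. w i) = 1"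
  shows "measure_pmf.expectation (pmf_of_list (map (\<lambda>i. (i, w i)) [0..<N])) g = (\<Sum>i<N. w i * g i)"
proof -
  let ?xs = "map (\<lambda>i. (i, w i)) [0..<N]"
  have "sum_list (map snd ?xs) = (\<Sum>i<N. w i)"
    by (simp add: sum_list_sum_nth atLeast0LessThan o_def)
  hence wf: "pmf_of_list_wf ?xs" using nn s1 by (auto intro!: pmf_of_list_wfI)
  have pm: "pmf (pmf_of_list ?xs) i = (if i < N then w i else 0)" for i
    using pmf_pmf_of_list[OF wf] filt_upt by simp
  have st: "set_pmf (pmf_of_list ?xs) \<subseteq> {..<N}" using set_pmf_of_list[OF wf] by auto
  have "measure_pmf.expectation (pmf_of_list ?xs) g = (\<Sum>a\<in>{..<N}. pmf (pmf_of_list ?xs) a *\<^sub>R g a)"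
    by (rule integral_measure_pmf) (use st in auto)
  also have "\<dots> = (\<Sum>i<N. w i * g i)" by (simp add: pm)
  finally show ?thesis .
qed

lemma fdev_alt:
  assumes "n > 0"
  shows "fdev n y = (\<Sum>l<n. (real (y l))\<^sup>2) - (\<Sum>l<n. real (y l))\<^sup>2 / real n"
proof -
  let ?T = "\<Sum>l<n. real (y l)"
  have m: "mean_load n y = ?T / n" by (simp add: mean_load_def)
  have "fdev n y = (\<Sum>l<n. (real (y l))\<^sup>2 - 2 * (?T/n) * real (y l) + (?T/n)\<^sup>2)"
    unfolding fdev_def m by (intro sum.cong) (auto simp: power2_eq_square algebra_simps)
  also have "\<dots> = (\<Sum>l<n. (real (y l))\<^sup>2) - 2 * (?T/n) * ?T + n * (?T/n)\<^sup>2"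
    by (simp add: sum.distrib sum_subtractf sum_distrib_left)
  also have "\<dots> = (\<Sum>l<n. (real (y l))\<^sup>2) - ?T\<^sup>2 / n"
    using assms by (simp add: power2_eq_square field_simps)
  finally show ?thesis .
qed

lemma fdev_upd:
  assumes "n > 0" "l < n"
  shows "fdev n (x(l := Suc (x l))) = fdev n x + 2 * (real (x l) - mean_load n x) + 1 - 1 / real n"
proof -
  let ?y = "x(l := Suc (x l))"
  have s1: "(\<Sum>k<n. real (?y k)) = (\<Sum>k<n. real (x k)) + 1"
  proof -
    have "(\<Sum>k<n. real (?y k)) = (\<Sum>k<n. real (x k) + (if k = l then 1 else 0))"
      by (intro sum.cong) auto
    thus ?thesis using assms by (simp add: sum.distrib)
  qed
  have s2: "(\<Sum>k<n. (real (?y k))\<^sup>2) = (\<Sum>k<n. (real (x k))\<^sup>2) + 2 * real (x l) + 1"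
  proof -
    have "(\<Sum>k<n. (real (?y k))\<^sup>2) = (\<Sum>k<n. (real (x k))\<^sup>2 + (if k = l then 2 * real (x l) + 1 else 0))"
      by (intro sum.cong) (auto simp: power2_eq_square algebra_simps)
    thus ?thesis using assms by (simp add: sum.distrib)
  qed
  show ?thesis using assms
    unfolding fdev_alt[OF assms(1), of ?y] fdev_alt[OF assms(1), of x] s1 s2 mean_load_def
    by (simp add: power2_eq_square field_simps)
qed

definition rng :: "(nat \<Rightarrow> nat list) \<Rightarrow> nat \<Rightarrow> (nat \<Rightarrow> nat) \<Rightarrow> real" where
  "rng S i x = real (Max (x ` set (S i))) - real (Min (x ` set (S i)))"

lemma rng_ge: assumes "u \<in> set (S i)" "v \<in> set (S i)"
  shows "\<bar>real (x u) - real (x v)\<bar> \<le> rng S i x"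
proof -
  have "x u \<le> Max (x ` set (S i))" "x v \<le> Max (x ` set (S i))"
       "Min (x ` set (S i)) \<le> x u" "Min (x ` set (S i)) \<le> x v" using assms by auto
  thus ?thesis unfolding rng_def by linarith
qed

lemma rng_nonneg: "S i \<noteq> [] \<Longrightarrow> rng S i x \<ge> 0"
  using rng_ge[of "hd (S i)" S i "hd (S i)" x] by simp

lemma jmin_props:
  assumes "S i \<noteq> []"
  shows "jmin S i x < length (S i) \<and> x (S i ! jmin S i x) = Min (x ` set (S i))"
proof -
  have "Min (x ` set (S i)) \<in> x ` set (S i)" using assms by (intro Min_in) auto
  then obtain j where "j < length (S i)" "x (S i ! j) = Min (x ` set (S i))"
    by (auto simp: in_set_conv_nth)
  thus ?thesis unfolding jmin_def
    by (intro LeastI[where P="\<lambda>j. j < length (S i) \<and> x (S i ! j) = Min (x ` set (S i))"]) auto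
qed

lemma jmax_props:
  assumes "S i \<noteq> []"
  shows "jmax S i x < length (S i) \<and> x (S i ! jmax S i x) = Max (x ` set (S i))"
proof -
  have "Max (x ` set (S i)) \<in> x ` set (S i)" using assms by (intro Max_in) auto
  then obtain j where "j < length (S i)" "x (S i ! j) = Max (x ` set (S i))"
    by (auto simp: in_set_conv_nth)
  thus ?thesis unfolding jmax_def
    by (intro GreatestI_nat[where P="\<lambda>j. j < length (S i) \<and> x (S i ! j) = Max (x ` set (S i))" and b="length (S i)"]) auto
qed

lemma jmin_ne_jmax:
  assumes "length (S i) \<ge> 2"
  shows "jmin S i x \<noteq> jmax S i x"
proof
  assume eq: "jmin S i x = jmax S i x"
  have ne: "S i \<noteq> []" using assms by auto
  have mm: "Min (x ` set (S i)) = Max (x ` set (S i))"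
    using jmin_props[of S i x, OF ne] jmax_props[of S i x, OF ne] eq by simp
  have all: "x (S i ! j) = Min (x ` set (S i))" if "j < length (S i)" for j
  proof -
    have "S i ! j \<in> set (S i)" using that by simp
    hence "Min (x ` set (S i)) \<le> x (S i ! j)" "x (S i ! j) \<le> Max (x ` set (S i))" by auto
    thus ?thesis using mm by simp
  qed
  have "jmin S i x \<le> 0" unfolding jmin_def
    by (rule Least_le) (use all[of 0] ne in auto)
  moreover have "length (S i) - 1 \<le> jmax S i x" unfolding jmax_def
    by (rule Greatest_le_nat[where b="length (S i)"]) (use all assms mm in auto)
  ultimately show False using eq assms by simp
qed

lemma nb_JSQ:
  assumes ne: "S i \<noteq> []" and ap: "\<forall>j<length (S i). alpha i j \<ge> c" and c: "c \<ge> 0"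
    and row: "(\<Sum>j<length (S i). alpha i j) = lam i"
  shows "(\<forall>j<length (S i). route_prob JSQ S lam alpha i j x \<ge> 0) \<and>
         (\<Sum>j<length (S i). route_prob JSQ S lam alpha i j x) = 1 \<and>
         lam i * (\<Sum>j<length (S i). route_prob JSQ S lam alpha i j x * (real (x (S i ! j)) - \<mu>))
           \<le> (\<Sum>j<length (S i). alpha i j * (real (x (S i ! j)) - \<mu>)) - c * rng S i x"
proof -
  define L where "L = length (S i)"
  define jm where "jm = jmin S i x"
  define jM where "jM = jmax S i x"
  define d where "d = (\<lambda>j. real (x (S i ! j)) - \<mu>)"
  have jm: "jm < L" "x (S i ! jm) = Min (x ` set (S i))"
    using jmin_props[of S i x, OF ne] unfolding jm_def L_def by auto
  have jM: "jM < L" "x (S i ! jM) = Max (x ` set (S i))"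
    using jmax_props[of S i x, OF ne] unfolding jM_def L_def by auto
  have r: "route_prob JSQ S lam alpha i j x = (if j = jm then 1 else 0)" for j
    by (simp add: route_prob_def jm_def)
  have s1: "(\<Sum>j<L. route_prob JSQ S lam alpha i j x) = 1" using jm by (simp add: r)
  have "(\<Sum>j<L. route_prob JSQ S lam alpha i j x * d j) = (\<Sum>j<L. if j = jm then d j else 0)"
    by (rule sum.cong) (auto simp: r)
  hence s2: "(\<Sum>j<L. route_prob JSQ S lam alpha i j x * d j) = d jm" using jm by simp
  have e1: "lam i * d jm = (\<Sum>j<L. alpha i j * d jm)" using row by (simp add: sum_distrib_right[symmetric] L_def)
  have nn: "0 \<le> alpha i j * (d j - d jm)" if "j < L" for j
  proof -
    have "S i ! j \<in> set (S i)" using that L_def by simp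
    hence "Min (x ` set (S i)) \<le> x (S i ! j)" by simp
    hence "d j - d jm \<ge> 0" using jm unfolding d_def by simp
    moreover have "alpha i j \<ge> 0" using ap c that L_def by force
    ultimately show ?thesis by simp
  qed
  have "alpha i jM * (d jM - d jm) \<le> (\<Sum>j<L. alpha i j * (d j - d jm))"
    by (rule member_le_sum) (use jM nn in auto)
  moreover have "d jM - d jm = rng S i x" using jm jM unfolding d_def rng_def by simp
  moreover have "c * rng S i x \<le> alpha i jM * rng S i x"
    using ap jM rng_nonneg[of S i x, OF ne] L_def by (intro mult_right_mono) auto
  moreover have "(\<Sum>j<L. alpha i j * (d j - d jm)) = (\<Sum>j<L. alpha i j * d j) - (\<Sum>j<L. alpha i j * d jm)"
    by (simp add: right_diff_distrib sum_subtractf)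
  ultimately have "lam i * (\<Sum>j<L. route_prob JSQ S lam alpha i j x * d j) \<le> (\<Sum>j<L. alpha i j * d j) - c * rng S i x"
    using s2 e1 by (smt (verit))
  thus ?thesis using s1 unfolding L_def d_def by (simp add: r)
qed

lemma nb_PSERP:
  assumes ne: "S i \<noteq> []" and ap: "\<forall>j<length (S i). e < alpha i j" and e: "0 < e"
    and row: "(\<Sum>j<length (S i). alpha i j) = lam i" and lp: "lam i > 0"
  shows "(\<forall>j<length (S i). route_prob (PSERP e) S lam alpha i j x \<ge> 0) \<and>
         (\<Sum>j<length (S i). route_prob (PSERP e) S lam alpha i j x) = 1 \<and>
         lam i * (\<Sum>j<length (S i). route_prob (PSERP e) S lam alpha i j x * (real (x (S i ! j)) - \<mu>))
           \<le> (\<Sum>j<length (S i). alpha i j * (real (x (S i ! j)) - \<mu>)) - e * rng S i x"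
proof (cases "length (S i) = 1")
  case True
  then obtain a where a: "S i = [a]" by (auto simp: length_Suc_conv)
  have "rng S i x = 0" by (simp add: rng_def a)
  moreover have "alpha i 0 = lam i" using row a by simp
  ultimately show ?thesis using a by (simp add: route_prob_def)
next
  case False
  hence L2: "length (S i) \<ge> 2" using ne by (cases "S i") (auto simp: Suc_le_eq)
  define L where "L = length (S i)"
  define jm where "jm = jmin S i x"
  define jM where "jM = jmax S i x"
  define d where "d = (\<lambda>j. real (x (S i ! j)) - \<mu>)"
  have jm: "jm < L" "x (S i ! jm) = Min (x ` set (S i))"
    using jmin_props[of S i x, OF ne] unfolding jm_def L_def by auto
  have jM: "jM < L" "x (S i ! jM) = Max (x ` set (S i))"
    using jmax_props[of S i x, OF ne] unfolding jM_def L_def by auto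
  have neq: "jm \<noteq> jM" using jmin_ne_jmax[of S i x, OF L2] unfolding jm_def jM_def .
  define num where "num = (\<lambda>j. alpha i j + (if j = jm then e else 0) - (if j = jM then e else 0))"
  have r: "route_prob (PSERP e) S lam alpha i j x = num j / lam i" for j
    using False neq unfolding route_prob_def num_def jm_def jM_def by auto
  have nn: "route_prob (PSERP e) S lam alpha i j x \<ge> 0" if "j < L" for j
  proof -
    have "num j \<ge> 0" using ap that neq e unfolding num_def L_def
      by (auto intro: less_imp_le)
    thus ?thesis using lp r by simp
  qed
  have sn: "(\<Sum>j<L. num j) = lam i"
    using jm jM neq row unfolding num_def L_def by (simp add: sum.distrib sum_subtractf)
  have s1: "(\<Sum>j<L. route_prob (PSERP e) S lam alpha i j x) = 1"
    using sn lp by (simp add: r sum_divide_distrib[symmetric])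
  have "lam i * (\<Sum>j<L. route_prob (PSERP e) S lam alpha i j x * d j) = (\<Sum>j<L. num j * d j)"
    using lp by (simp add: r sum_distrib_left)
  also have "\<dots> = (\<Sum>j<L. alpha i j * d j + (if j = jm then e * d j else 0) - (if j = jM then e * d j else 0))"
    by (rule sum.cong) (auto simp: num_def algebra_simps)
  also have "\<dots> = (\<Sum>j<L. alpha i j * d j) + e * d jm - e * d jM"
    using jm jM by (simp add: sum.distrib sum_subtractf)
  also have "\<dots> = (\<Sum>j<L. alpha i j * d j) - e * rng S i x"
    using jm jM unfolding d_def rng_def by (simp add: algebra_simps)
  finally show ?thesis using s1 nn unfolding L_def d_def by simp
qed

lemma upt_wf:
  fixes w :: "nat \<Rightarrow> real"
  assumes nn: "\<forall>i<N. w i \<ge> 0" and s1: "(\<Sum>i<N. w i) = 1"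
  shows "pmf_of_list_wf (map (\<lambda>i. (i, w i)) [0..<N])"
    "pmf (pmf_of_list (map (\<lambda>i. (i, w i)) [0..<N])) i = (if i < N then w i else 0)"
    "set_pmf (pmf_of_list (map (\<lambda>i. (i, w i)) [0..<N])) \<subseteq> {..<N}"
proof -
  let ?xs = "map (\<lambda>i. (i, w i)) [0..<N]"
  have "sum_list (map snd ?xs) = (\<Sum>i<N. w i)"
    by (simp add: sum_list_sum_nth atLeast0LessThan o_def)
  thus wf: "pmf_of_list_wf ?xs" using nn s1 by (auto intro!: pmf_of_list_wfI)
  show "pmf (pmf_of_list ?xs) i = (if i < N then w i else 0)"
    using pmf_pmf_of_list[OF wf] filt_upt by simp
  show "set_pmf (pmf_of_list ?xs) \<subseteq> {..<N}" using set_pmf_of_list[OF wf] by auto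
qed

lemma step_exp:
  fixes g :: "(nat \<Rightarrow> nat) \<Rightarrow> real"
  assumes lp: "\<forall>i<K. lam i \<ge> 0" "(\<Sum>i<K. lam i) = 1"
   and rp: "\<forall>i<K. (\<forall>j<length (S i). route_prob pol S lam alpha i j x \<ge> 0) \<and>
              (\<Sum>j<length (S i). route_prob pol S lam alpha i j x) = 1"
  shows "measure_pmf.expectation (step_pmf pol K S lam alpha x) g =
    (\<Sum>i<K. lam i * (\<Sum>j<length (S i). route_prob pol S lam alpha i j x * g (x(S i ! j := Suc (x (S i ! j))))))"
proof -
  let ?P = "pmf_of_list (map (\<lambda>i. (i, lam i)) [0..<K])"
  let ?Q = "\<lambda>i. pmf_of_list (map (\<lambda>j. (j, route_prob pol S lam alpha i j x)) [0..<length (S i)])"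
  let ?F = "\<lambda>i. map_pmf (\<lambda>j. x((S i ! j) := Suc (x (S i ! j)))) (?Q i)"
  note P = upt_wf[of K lam, OF lp]
  have Qf: "finite (set_pmf (?F i))" if "i < K" for i
    using upt_wf(3)[of "length (S i)" "\<lambda>j. route_prob pol S lam alpha i j x"] rp that
    by (auto intro: finite_subset)
  have "measure_pmf.expectation (step_pmf pol K S lam alpha x) g =
        (\<Sum>a\<in>{..<K}. pmf ?P a *\<^sub>R measure_pmf.expectation (?F a) g)"
    unfolding step_pmf_def by (rule pmf_expectation_bind) (use Qf P(3) in auto)
  also have "\<dots> = (\<Sum>i<K. lam i * (\<Sum>j<length (S i). route_prob pol S lam alpha i j x * g (x(S i ! j := Suc (x (S i ! j))))))"
  proof (rule sum.cong)
    fix i assume i: "i \<in> {..<K}"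
    have "measure_pmf.expectation (?F i) g = measure_pmf.expectation (?Q i) (\<lambda>j. g (x((S i ! j) := Suc (x (S i ! j)))))"
      by simp
    also have "\<dots> = (\<Sum>j<length (S i). route_prob pol S lam alpha i j x * g (x(S i ! j := Suc (x (S i ! j)))))"
      by (rule exp_pmf_of_list_upt) (use rp i in auto)
    finally show "pmf ?P i *\<^sub>R measure_pmf.expectation (?F i) g = lam i * (\<Sum>j<length (S i). route_prob pol S lam alpha i j x * g (x(S i ! j := Suc (x (S i ! j)))))"
      using P(2)[of i] i by simp
  qed simp
  finally show ?thesis .
qed

lemma path_bound:
  assumes "(j,k) \<in> {(u,v). adjacent K S u v}\<^sup>*" and ne: "\<forall>i<K. S i \<noteq> []"
  shows "\<exists>m::nat. \<forall>x. \<bar>real (x j) - real (x k)\<bar> \<le> real m * (\<Sum>i<K. rng S i x)"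
  using assms(1)
proof (induction rule: rtrancl_induct)
  case base
  show ?case by (rule exI[of _ 0]) simp
next
  case (step y z)
  then obtain m where m: "\<forall>x. \<bar>real (x j) - real (x y)\<bar> \<le> real m * (\<Sum>i<K. rng S i x)" by blast
  from step(2) obtain i where i: "i < K" "y \<in> set (S i)" "z \<in> set (S i)"
    by (auto simp: adjacent_def)
  have "\<bar>real (x j) - real (x z)\<bar> \<le> real (Suc m) * (\<Sum>i<K. rng S i x)" for x
  proof -
    have "\<bar>real (x y) - real (x z)\<bar> \<le> rng S i x" by (rule rng_ge) (use i in auto)
    also have "\<dots> \<le> (\<Sum>i<K. rng S i x)"
      by (rule member_le_sum) (use i ne rng_nonneg in auto)
    finally show ?thesis using m[rule_format, of x] by (simp add: algebra_simps)
  qed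
  thus ?case by blast
qed

lemma alpha_zero:
  assumes nb: "\<forall>i<K. set (S i) \<subseteq> {..<n}"
    and an: "\<forall>l<n. (\<Sum>i<K. \<Sum>j<length (S i). alpha i j * (if l = S i ! j then 1 else 0)) = 1 / real n"
    and n: "n > 0"
  shows "(\<Sum>i<K. \<Sum>j<length (S i). alpha i j * (real (x (S i ! j)) - mean_load n x)) = 0"
proof -
  define d where "d = (\<lambda>l. real (x l) - mean_load n x)"
  have "(\<Sum>i<K. \<Sum>j<length (S i). alpha i j * d (S i ! j)) =
        (\<Sum>i<K. \<Sum>j<length (S i). \<Sum>l<n. alpha i j * (if l = S i ! j then 1 else 0) * d l)"
  proof (intro sum.cong refl)
    fix i j assume "i \<in> {..<K}" "j \<in> {..<length (S i)}"
    hence lt: "S i ! j < n" using nb nth_mem by blast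
    have "(\<Sum>l<n. alpha i j * (if l = S i ! j then 1 else 0) * d l) = (\<Sum>l<n. if l = S i ! j then alpha i j * d l else 0)"
      by (rule sum.cong) auto
    thus "alpha i j * d (S i ! j) = (\<Sum>l<n. alpha i j * (if l = S i ! j then 1 else 0) * d l)"
      using lt by simp
  qed
  also have "\<dots> = (\<Sum>l<n. \<Sum>i<K. \<Sum>j<length (S i). alpha i j * (if l = S i ! j then 1 else 0) * d l)"
    by (subst sum.swap) (simp add: sum.swap[of _ "{..<n}"])
  also have "\<dots> = (\<Sum>l<n. d l / real n)"
    using an by (intro sum.cong refl) (simp add: sum_distrib_right[symmetric])
  also have "\<dots> = (\<Sum>l<n. d l) / real n" by (simp add: sum_divide_distrib)
  also have "(\<Sum>l<n. d l) = 0" using n unfolding d_def mean_load_def by (simp add: sum_subtractf)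
  finally show ?thesis unfolding d_def by simp
qed

theorem lemma3p4:
  fixes n K :: nat and S :: "nat \<Rightarrow> nat list" and lam :: "nat \<Rightarrow> real"
    and alpha :: "nat \<Rightarrow> nat \<Rightarrow> real" and pol :: policy
  assumes nbhd: "\<forall>i<K. S i \<noteq> [] \<and> distinct (S i) \<and> set (S i) \<subseteq> {..<n}"
    and cover: "(\<Union>i<K. set (S i)) = {..<n}"
    and lam_pos: "\<forall>i<K. lam i > 0"
    and lam_sum: "(\<Sum>i<K. lam i) = 1"
    and conn: "graph_connected n K S"
    and alpha_pos: "\<forall>i<K. \<forall>j<length (S i). alpha i j > 0"
    and alpha_row: "\<forall>i<K. (\<Sum>j<length (S i). alpha i j) = lam i"
    and alpha_node: "\<forall>l<n. (\<Sum>i<K. \<Sum>j<length (S i).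
                         alpha i j * (if l = S i ! j then 1 else 0)) = 1 / real n"
    and policy: "pol = JSQ \<or>
                 (\<exists>eps. pol = PSERP eps \<and> 0 < eps \<and>
                        (\<forall>i<K. \<forall>j<length (S i). eps < alpha i j))"
  shows "\<exists>c2 > 0. \<exists>a > 0. \<forall>x :: nat \<Rightarrow> nat.
           Max ((\<lambda>l. \<bar>real (x l) - mean_load n x\<bar>) ` {..<n}) \<ge> a \<longrightarrow>
           measure_pmf.expectation (step_pmf pol K S lam alpha x) (fdev n) - fdev n x
             \<le> - c2 * sqrt (fdev n x)"
proof -
  have K0: "K > 0" using lam_sum by (cases K) auto
  have ne: "\<forall>i<K. S i \<noteq> []" using nbhd by auto
  have nbs: "\<forall>i<K. set (S i) \<subseteq> {..<n}" using nbhd by auto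
  have n0: "n > 0"
  proof -
    have "hd (S 0) \<in> set (S 0)" using ne K0 by simp
    hence "hd (S 0) < n" using nbs K0 by auto
    thus ?thesis by simp
  qed
  define R where "R = (\<lambda>x. \<Sum>i<K. rng S i x)"
  have Rnn: "R x \<ge> 0" for x unfolding R_def by (rule sum_nonneg) (use ne rng_nonneg in auto)
  obtain c where c: "c > 0" and cprop: "\<forall>x. \<forall>i<K.
      (\<forall>j<length (S i). route_prob pol S lam alpha i j x \<ge> 0) \<and>
      (\<Sum>j<length (S i). route_prob pol S lam alpha i j x) = 1 \<and>
      lam i * (\<Sum>j<length (S i). route_prob pol S lam alpha i j x * (real (x (S i ! j)) - mean_load n x))
        \<le> (\<Sum>j<length (S i). alpha i j * (real (x (S i ! j)) - mean_load n x)) - c * rng S i x"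
  proof (cases "pol = JSQ")
    case True
    define A where "A = (\<lambda>(i,j). alpha i j) ` (SIGMA i:{..<K}. {..<length (S i)})"
    have fin: "finite A" unfolding A_def by auto
    have "(0, 0) \<in> (SIGMA i:{..<K}. {..<length (S i)})" using K0 ne by auto
    hence Ane: "A \<noteq> {}" unfolding A_def by blast
    have Apos: "Min A > 0" using fin Ane alpha_pos unfolding A_def by (subst Min_gr_iff) auto
    have Ale: "\<forall>i<K. \<forall>j<length (S i). Min A \<le> alpha i j"
      using fin unfolding A_def by (auto intro!: Min_le)
    show ?thesis
    proof (rule that[of "Min A"])
      show "Min A > 0" by (rule Apos)
      show "\<forall>x. \<forall>i<K. (\<forall>j<length (S i). route_prob pol S lam alpha i j x \<ge> 0) \<and>
      (\<Sum>j<length (S i). route_prob pol S lam alpha i j x) = 1 \<and>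
      lam i * (\<Sum>j<length (S i). route_prob pol S lam alpha i j x * (real (x (S i ! j)) - mean_load n x))
        \<le> (\<Sum>j<length (S i). alpha i j * (real (x (S i ! j)) - mean_load n x)) - Min A * rng S i x"
        using nb_JSQ[of S _ "Min A" alpha lam] ne Ale Apos alpha_row True by auto
    qed
  next
    case False
    then obtain eps where e: "pol = PSERP eps" "0 < eps" "\<forall>i<K. \<forall>j<length (S i). eps < alpha i j"
      using policy by blast
    show ?thesis
    proof (rule that[of eps])
      show "eps > 0" by (rule e(2))
      show "\<forall>x. \<forall>i<K. (\<forall>j<length (S i). route_prob pol S lam alpha i j x \<ge> 0) \<and>
      (\<Sum>j<length (S i). route_prob pol S lam alpha i j x) = 1 \<and>
      lam i * (\<Sum>j<length (S i). route_prob pol S lam alpha i j x * (real (x (S i ! j)) - mean_load n x))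
        \<le> (\<Sum>j<length (S i). alpha i j * (real (x (S i ! j)) - mean_load n x)) - eps * rng S i x"
        using nb_PSERP[of S _ eps alpha lam] ne e alpha_row lam_pos by auto
    qed
  qed
  have drift: "measure_pmf.expectation (step_pmf pol K S lam alpha x) (fdev n) - fdev n x \<le> 1 - 2 * c * R x" for x
  proof -
    define d where "d = (\<lambda>l. real (x l) - mean_load n x)"
    define r where "r = (\<lambda>i j. route_prob pol S lam alpha i j x)"
    define F where "F = fdev n x + 1 - 1 / real n"
    have rp: "\<forall>i<K. (\<forall>j<length (S i). r i j \<ge> 0) \<and> (\<Sum>j<length (S i). r i j) = 1"
      using cprop unfolding r_def by blast
    have "measure_pmf.expectation (step_pmf pol K S lam alpha x) (fdev n) =
      (\<Sum>i<K. lam i * (\<Sum>j<length (S i). r i j * fdev n (x(S i ! j := Suc (x (S i ! j))))))"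
      unfolding r_def by (rule step_exp) (use lam_pos lam_sum cprop in auto)
    also have "\<dots> = (\<Sum>i<K. lam i * (F + 2 * (\<Sum>j<length (S i). r i j * d (S i ! j))))"
    proof (rule sum.cong[OF refl])
      fix i assume i: "i \<in> {..<K}"
      have "(\<Sum>j<length (S i). r i j * fdev n (x(S i ! j := Suc (x (S i ! j))))) =
            (\<Sum>j<length (S i). r i j * F + 2 * (r i j * d (S i ! j)))"
      proof (rule sum.cong[OF refl])
        fix j assume j: "j \<in> {..<length (S i)}"
        have "S i ! j < n" using nbs i j nth_mem by blast
        hence "fdev n (x(S i ! j := Suc (x (S i ! j)))) = F + 2 * d (S i ! j)"
          using fdev_upd[OF n0, of "S i ! j" x] unfolding F_def d_def by simp
        thus "r i j * fdev n (x(S i ! j := Suc (x (S i ! j)))) = r i j * F + 2 * (r i j * d (S i ! j))"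
          by (simp add: algebra_simps)
      qed
      also have "\<dots> = F + 2 * (\<Sum>j<length (S i). r i j * d (S i ! j))"
        using rp i by (simp add: sum.distrib sum_distrib_left[symmetric] sum_distrib_right[symmetric])
      finally show "lam i * (\<Sum>j<length (S i). r i j * fdev n (x(S i ! j := Suc (x (S i ! j))))) =
          lam i * (F + 2 * (\<Sum>j<length (S i). r i j * d (S i ! j)))" by simp
    qed
    also have "\<dots> = (\<Sum>i<K. lam i * F + 2 * (lam i * (\<Sum>j<length (S i). r i j * d (S i ! j))))"
      by (simp add: algebra_simps)
    also have "\<dots> = F + 2 * (\<Sum>i<K. lam i * (\<Sum>j<length (S i). r i j * d (S i ! j)))"
      using lam_sum by (simp add: sum.distrib sum_distrib_left[symmetric] sum_distrib_right[symmetric])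
    also have "\<dots> \<le> F + 2 * (\<Sum>i<K. (\<Sum>j<length (S i). alpha i j * d (S i ! j)) - c * rng S i x)"
    proof -
      have "(\<Sum>i<K. lam i * (\<Sum>j<length (S i). r i j * d (S i ! j))) \<le>
            (\<Sum>i<K. (\<Sum>j<length (S i). alpha i j * d (S i ! j)) - c * rng S i x)"
        by (rule sum_mono) (use cprop in \<open>auto simp: r_def d_def\<close>)
      thus ?thesis by simp
    qed
    also have "\<dots> = F - 2 * c * R x"
    proof -
      have z: "(\<Sum>i<K. \<Sum>j<length (S i). alpha i j * d (S i ! j)) = 0"
        using alpha_zero[OF nbs alpha_node n0, of x] unfolding d_def .
      have "(\<Sum>i<K. (\<Sum>j<length (S i). alpha i j * d (S i ! j)) - c * rng S i x) = 0 - c * R x"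
        unfolding R_def by (simp only: sum_subtractf z sum_distrib_left)
      thus ?thesis by simp
    qed
    moreover have "1 / real n \<ge> 0" by simp
    ultimately show ?thesis unfolding F_def by linarith
  qed
  have "\<forall>p\<in>{..<n}\<times>{..<n}. \<exists>m::nat. \<forall>x. \<bar>real (x (fst p)) - real (x (snd p))\<bar> \<le> real m * R x"
    using conn path_bound[OF _ ne] unfolding graph_connected_def R_def by auto
  then obtain mf where mf: "\<forall>p\<in>{..<n}\<times>{..<n}. \<forall>x. \<bar>real (x (fst p)) - real (x (snd p))\<bar> \<le> real (mf p) * R x"
    by metis
  define M where "M = 1 + (\<Sum>p\<in>{..<n}\<times>{..<n}. real (mf p))"
  have M0: "M > 0" unfolding M_def by (simp add: sum_nonneg add_pos_nonneg)
  have Mb: "\<bar>real (x j) - real (x k)\<bar> \<le> M * R x" if "j < n" "k < n" for x j k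
  proof -
    have "real (mf (j,k)) \<le> (\<Sum>p\<in>{..<n}\<times>{..<n}. real (mf p))"
      by (rule member_le_sum) (use that in auto)
    hence "real (mf (j,k)) \<le> M" unfolding M_def by simp
    hence "real (mf (j,k)) * R x \<le> M * R x" using Rnn by (rule mult_right_mono)
    moreover have "\<bar>real (x j) - real (x k)\<bar> \<le> real (mf (j,k)) * R x"
      using mf that by (metis SigmaI fst_conv lessThan_iff snd_conv)
    ultimately show ?thesis by linarith
  qed
  have dev: "\<bar>real (x l) - mean_load n x\<bar> \<le> M * R x" if l: "l < n" for x l
  proof -
    have "real (x l) - mean_load n x = (\<Sum>k<n. real (x l) - real (x k)) / real n"
      using n0 unfolding mean_load_def by (simp add: sum_subtractf field_simps)
    hence "\<bar>real (x l) - mean_load n x\<bar> = \<bar>\<Sum>k<n. real (x l) - real (x k)\<bar> / real n" by simp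
    also have "\<dots> \<le> (\<Sum>k<n. \<bar>real (x l) - real (x k)\<bar>) / real n"
      by (intro divide_right_mono sum_abs) simp
    also have "\<dots> \<le> (\<Sum>k<n. M * R x) / real n"
      by (intro divide_right_mono sum_mono) (use Mb l in auto)
    also have "\<dots> = M * R x" using n0 by simp
    finally show ?thesis .
  qed
  have p1: "c / (M * sqrt (real n)) > 0" using c M0 n0 by simp
  have p2: "M / c > 0" using c M0 by simp
  have main: "\<forall>x :: nat \<Rightarrow> nat.
           Max ((\<lambda>l. \<bar>real (x l) - mean_load n x\<bar>) ` {..<n}) \<ge> M / c \<longrightarrow>
           measure_pmf.expectation (step_pmf pol K S lam alpha x) (fdev n) - fdev n x
             \<le> - (c / (M * sqrt (real n))) * sqrt (fdev n x)"
  proof (intro allI impI)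
    fix x :: "nat \<Rightarrow> nat"
    assume a: "M / c \<le> Max ((\<lambda>l. \<bar>real (x l) - mean_load n x\<bar>) ` {..<n})"
    have "Max ((\<lambda>l. \<bar>real (x l) - mean_load n x\<bar>) ` {..<n}) \<le> M * R x"
      by (rule Max.boundedI) (use n0 dev in auto)
    hence "M / c \<le> M * R x" using a by linarith
    hence "M \<le> c * (M * R x)" using c by (simp add: field_simps)
    hence cR: "1 \<le> c * R x" using M0 by (simp add: algebra_simps)
    have "fdev n x \<le> (\<Sum>l<n. (M * R x)\<^sup>2)" unfolding fdev_def
    proof (rule sum_mono)
      fix l assume "l \<in> {..<n}"
      hence "\<bar>real (x l) - mean_load n x\<bar> \<le> M * R x" using dev by simp
      hence "\<bar>real (x l) - mean_load n x\<bar>\<^sup>2 \<le> (M * R x)\<^sup>2" by (rule power_mono) simp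
      thus "(real (x l) - mean_load n x)\<^sup>2 \<le> (M * R x)\<^sup>2" by simp
    qed
    hence "sqrt (fdev n x) \<le> sqrt (real n * (M * R x)\<^sup>2)" by simp
    also have "\<dots> = sqrt (real n) * (M * R x)" using M0 Rnn[of x] by (simp add: real_sqrt_mult)
    finally have sq: "sqrt (fdev n x) \<le> sqrt (real n) * (M * R x)" .
    have "c / (M * sqrt (real n)) * sqrt (fdev n x) \<le> c / (M * sqrt (real n)) * (sqrt (real n) * (M * R x))"
      using sq c M0 by (intro mult_left_mono) auto
    also have "\<dots> = c * R x" using M0 n0 by simp
    finally have "c / (M * sqrt (real n)) * sqrt (fdev n x) \<le> c * R x" .
    thus "measure_pmf.expectation (step_pmf pol K S lam alpha x) (fdev n) - fdev n x
             \<le> - (c / (M * sqrt (real n))) * sqrt (fdev n x)"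
      using drift[of x] cR by linarith
  qed
  show ?thesis using p1 p2 main by blast
qed

end
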